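(* $$4^{-4}\sum_{n=0}^\infty\frac{(-1)^n}{n!}3^n\left[\gamma_n\!\left(\tfrac14\right)-\gamma_n\!\left(\tfrac34\right)\right]=\frac1{768}\psi'''\!\left(\tfrac14\right)-\frac{\pi^4}{96}.$$
   Context: The Stieltjes constants $\gamma_n(a)$ are defined by the Laurent expansion of the Hurwitz zeta function at $s=1$: $\zeta(s,a)=\frac{1}{s-1}+\sum_{n\ge0}\frac{(-1)^n}{n!}\gamma_n(a)(s-1)^n$. $\psi=\Gamma'/\Gamma$ is the digamma function and $\psi'''$ its third derivative. *)

theory Defs
  imports "HOL-Complex_Analysis.Complex_Analysis"
begin

definition hurwitz_zeta_series :: "complex \<Rightarrow> real \<Rightarrow> complex" where
  "hurwitz_zeta_series s a = (\<Sum>k. inverse ((of_real (real k + a)) powr s))"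

text \<open>The regular part of zeta(s,a) at s = 1: the (unique, by the identity theorem)
  entire function agreeing with zeta(s,a) - 1/(s-1) on Re s > 1.\<close>
definition hurwitz_zeta_regular :: "real \<Rightarrow> complex \<Rightarrow> complex" where
  "hurwitz_zeta_regular a = (THE g. g holomorphic_on UNIV \<and>
      (\<forall>s. 1 < Re s \<longrightarrow> g s = hurwitz_zeta_series s a - 1 / (s - 1)))"

text \<open>Stieltjes constants: zeta(s,a) = 1/(s-1) + sum_n (-1)^n/n! gamma_n(a) (s-1)^n,
  i.e. gamma_n(a) = (-1)^n times the n-th derivative at 1 of the regular part.\<close>
definition stieltjes :: "nat \<Rightarrow> real \<Rightarrow> complex" where
  "stieltjes n a = (-1) ^ n * (deriv ^^ n) (hurwitz_zeta_regular a) 1"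

end

theory Submission
  imports Defs
begin


lemma summable_powr_shift:
  assumes "c > 0" "\<sigma> > 1"
  shows "summable (\<lambda>k. (real k + c) powr (-\<sigma>))"
proof (rule summable_comparison_test_ev[of _ "\<lambda>k. real k powr (-\<sigma>)"])
  show "eventually (\<lambda>k. norm ((real k + c) powr (-\<sigma>)) \<le> real k powr (-\<sigma>)) sequentially"
    using eventually_gt_at_top[of "0::nat"]
  proof eventually_elim
    case (elim k)
    then show ?case using assms by (auto intro!: powr_mono2')
  qed
  show "summable (\<lambda>k. real k powr (-\<sigma>))" using assms by (simp add: summable_real_powr_iff)
qed

lemma norm_hz_term:
  assumes "c > 0"
  shows "norm (inverse (complex_of_real (real k + c) powr w)) = (real k + c) powr (- Re w)"
proof -
  have "norm (complex_of_real (real k + c) powr w) = (real k + c) powr Re w"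
    using assms by (subst norm_powr_real_powr) auto
  then show ?thesis by (simp add: norm_inverse powr_minus)
qed

lemma norm_hz_term' [simp]:
  assumes "c > 0"
  shows "norm (inverse ((of_nat k + complex_of_real c) powr w)) = (real k + c) powr (- Re w)"
  using norm_hz_term[OF assms, of k w] by simp

lemma hz_base_nz [simp]:
  assumes "c > 0"
  shows "of_nat k + complex_of_real c \<noteq> 0"
proof
  assume "of_nat k + complex_of_real c = 0"
  hence "Re (of_nat k + complex_of_real c) = Re 0" by (rule arg_cong)
  thus False using assms by simp
qed

lemma holo_suminf_ball:
  fixes f :: "nat \<Rightarrow> complex \<Rightarrow> complex"
  assumes "\<And>n. f n holomorphic_on cball z r"
    and "eventually (\<lambda>n. \<forall>w\<in>cball z r. norm (f n w) \<le> M n) sequentially" and "summable M"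
  shows "(\<lambda>w. \<Sum>n. f n w) holomorphic_on ball z r"
proof -
  have ul: "uniform_limit (cball z r) (\<lambda>n w. \<Sum>i<n. f i w) (\<lambda>w. \<Sum>i. f i w) sequentially"
    by (rule Weierstrass_m_test_ev[OF assms(2,3)])
  have "eventually (\<lambda>n. continuous_on (cball z r) (\<lambda>w. \<Sum>i<n. f i w) \<and>
          (\<lambda>w. \<Sum>i<n. f i w) holomorphic_on ball z r) sequentially"
  proof (intro always_eventually allI conjI)
    fix n
    have h: "(\<lambda>w. \<Sum>i<n. f i w) holomorphic_on cball z r"
      by (intro holomorphic_on_sum assms(1))
    then show "continuous_on (cball z r) (\<lambda>w. \<Sum>i<n. f i w)"
      by (rule holomorphic_on_imp_continuous_on)
    show "(\<lambda>w. \<Sum>i<n. f i w) holomorphic_on ball z r"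
      using h by (rule holomorphic_on_subset) auto
  qed
  from holomorphic_uniform_limit[OF this ul] show ?thesis by auto
qed

lemma holo_local:
  assumes "\<And>z. z \<in> S \<Longrightarrow> \<exists>r>0. f holomorphic_on ball z r"
  shows "f holomorphic_on S"
proof -
  have "f analytic_on S" unfolding analytic_on_def using assms by blast
  then show ?thesis by (rule analytic_imp_holomorphic)
qed



lemma hz_summable_norm:
  assumes "c > 0" "Re w > 1"
  shows "summable (\<lambda>k. norm (inverse (complex_of_real (real k + c) powr w)))"
  using summable_powr_shift[OF assms] assms by (simp add: norm_hz_term)

lemma hz_sums:
  assumes "c > 0" "Re w > 1"
  shows "(\<lambda>k. inverse (complex_of_real (real k + c) powr w)) sums hurwitz_zeta_series w c"
  unfolding hurwitz_zeta_series_def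
  using summable_norm_cancel[OF hz_summable_norm[OF assms]] by (rule summable_sums)

lemma hz_term_holo [holomorphic_intros]:
  assumes "c > 0" "f holomorphic_on S"
  shows "(\<lambda>w. inverse (complex_of_real (real k + c) powr f w)) holomorphic_on S"
proof -
  show ?thesis using assms
    by (intro holomorphic_intros) (auto simp: powr_def)
qed

lemma hz_holo:
  assumes "c > 0"
  shows "(\<lambda>w. hurwitz_zeta_series w c) holomorphic_on {w. 1 < Re w}"
proof (rule holo_local)
  fix z assume z: "z \<in> {w. 1 < Re w}"
  define r where "r = (Re z - 1) / 2"
  have r: "r > 0" using z by (simp add: r_def)
  have "(\<lambda>w. \<Sum>k. inverse (complex_of_real (real k + c) powr w)) holomorphic_on ball z r"
  proof (rule holo_suminf_ball[where M = "\<lambda>k. (real k + c) powr (-(1 + r))"])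
    fix n show "(\<lambda>w. inverse (complex_of_real (real n + c) powr w)) holomorphic_on cball z r"
      using assms by (intro holomorphic_intros)
  next
    show "eventually (\<lambda>n. \<forall>w\<in>cball z r. norm (inverse (complex_of_real (real n + c) powr w))
             \<le> (real n + c) powr (-(1 + r))) sequentially"
      using eventually_gt_at_top[of "0::nat"]
    proof eventually_elim
      case (elim n)
      show ?case
      proof
        fix w assume w: "w \<in> cball z r"
        have "\<bar>Re z - Re w\<bar> \<le> r"
          using w abs_Re_le_cmod[of "z - w"] by (auto simp: dist_norm)
        then have "Re z - Re w \<le> r" by (rule abs_le_D1)
        then have "Re w \<ge> 1 + r" using r_def by (simp add: field_simps)
        moreover have "1 \<le> real n + c" using elim assms by simp
        ultimately show "norm (inverse (complex_of_real (real n + c) powr w)) \<le> (real n + c) powr (-(1 + r))"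
          using assms by (simp add: norm_hz_term powr_mono)
      qed
    qed
  next
    show "summable (\<lambda>k. (real k + c) powr (-(1 + r)))"
      using summable_powr_shift[of c "1 + r"] assms r by simp
  qed
  then show "\<exists>r>0. (\<lambda>w. hurwitz_zeta_series w c) holomorphic_on ball z r"
    using r unfolding hurwitz_zeta_series_def by blast
qed

lemma hz_bound:
  assumes "c > 1" "Re v \<ge> 2"
  shows "norm (hurwitz_zeta_series v c) \<le> (\<Sum>k. (real k + c) powr (-2)) * c powr (2 - Re v)"
proof -
  have c0: "c > 0" using assms by simp
  have sn: "summable (\<lambda>k. norm (inverse (complex_of_real (real k + c) powr v)))"
    using hz_summable_norm[OF c0] assms by simp
  have s2: "summable (\<lambda>k. (real k + c) powr (-2))" using summable_powr_shift[of c 2] c0 by simp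
  have "norm (hurwitz_zeta_series v c) \<le> (\<Sum>k. norm (inverse (complex_of_real (real k + c) powr v)))"
    unfolding hurwitz_zeta_series_def by (rule summable_norm[OF sn])
  also have "\<dots> \<le> (\<Sum>k. (real k + c) powr (-2) * c powr (2 - Re v))"
  proof (rule suminf_le[OF _ sn])
    show "summable (\<lambda>k. (real k + c) powr (-2) * c powr (2 - Re v))"
      using s2 by (rule summable_mult2)
    fix k
    have "(real k + c) powr (- Re v) = (real k + c) powr (-2) * (real k + c) powr (2 - Re v)"
      by (simp add: powr_add[symmetric])
    also have "\<dots> \<le> (real k + c) powr (-2) * c powr (2 - Re v)"
      using assms by (intro mult_left_mono powr_mono2') auto
    finally show "norm (inverse (complex_of_real (real k + c) powr v)) \<le> (real k + c) powr (-2) * c powr (2 - Re v)"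
      using c0 by (simp add: norm_hz_term)
  qed
  also have "\<dots> = (\<Sum>k. (real k + c) powr (-2)) * c powr (2 - Re v)"
    using s2 by (rule suminf_mult2[symmetric])
  finally show ?thesis .
qed

lemma hz_shift:
  assumes "c > 0" "Re w > 1"
  shows "hurwitz_zeta_series w c = inverse (complex_of_real c powr w) + hurwitz_zeta_series w (c + 1)"
proof -
  have s: "summable (\<lambda>k. inverse (complex_of_real (real k + c) powr w))"
    using summable_norm_cancel[OF hz_summable_norm[OF assms]] .
  have "(\<Sum>n. inverse (complex_of_real (real (Suc n) + c) powr w)) =
        hurwitz_zeta_series w c - inverse (complex_of_real c powr w)"
    unfolding hurwitz_zeta_series_def using suminf_split_head[OF s] by simp
  moreover have "(\<lambda>n. inverse (complex_of_real (real (Suc n) + c) powr w)) =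
                 (\<lambda>n. inverse (complex_of_real (real n + (c + 1)) powr w))"
    by (simp add: algebra_simps)
  ultimately show ?thesis unfolding hurwitz_zeta_series_def by simp
qed



lemma pochhammer_nonneg0: "0 \<le> (x::real) \<Longrightarrow> 0 \<le> pochhammer x n"
  by (simp add: pochhammer_prod prod_nonneg)

lemma norm_pochhammer_le: "norm (pochhammer (z::complex) n) \<le> pochhammer (norm z) n"
proof (induction n)
  case 0 then show ?case by simp
next
  case (Suc n)
  have "norm (pochhammer z (Suc n)) = norm (pochhammer z n) * norm (z + of_nat n)"
    by (simp add: pochhammer_Suc norm_mult)
  also have "\<dots> \<le> pochhammer (norm z) n * (norm z + real n)"
  proof (rule mult_mono[OF Suc.IH])
    show "norm (z + of_nat n) \<le> norm z + real n"
      using norm_triangle_ineq[of z "of_nat n"] by simp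
  qed (auto intro: pochhammer_nonneg0)
  also have "\<dots> = pochhammer (norm z) (Suc n)" by (simp add: pochhammer_Suc)
  finally show ?case .
qed

lemma binom_powser_real:
  fixes q R :: real
  assumes "0 \<le> q" "q < 1" "R \<ge> 0"
  shows "(\<lambda>n. pochhammer R n / fact n * q ^ n) sums ((1 - q) powr (-R))"
proof -
  have "\<bar>-q\<bar> < 1" using assms by simp
  from gen_binomial_real[OF this, of "-R"]
  have "(\<lambda>n. ((-R) gchoose n) * (-q) ^ n) sums (1 + - q) powr (-R)" .
  also have "(\<lambda>n. ((-R) gchoose n) * (-q) ^ n) = (\<lambda>n. pochhammer R n / fact n * q ^ n)"
  proof
    fix n
    have e2: "((-R) gchoose n) = (-1)^n * (pochhammer R n / fact n)" by (simp add: gbinomial_pochhammer)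
    have e3: "(-q)^n = (-1)^n * q^n" by (rule power_minus)
    have "((-R) gchoose n) * (-q) ^ n = ((-1)^n * (-1)^n) * (pochhammer R n / fact n * q ^ n)"
      unfolding e2 e3 by (simp only: mult_ac)
    also have "(-1::real)^n * (-1)^n = 1" by (simp add: power_mult_distrib[symmetric])
    finally show "((-R) gchoose n) * (-q) ^ n = pochhammer R n / fact n * q ^ n" by simp
  qed
  finally show ?thesis by simp
qed

lemma norm_term_shift:
  assumes "c > 0" "real k + c \<ge> c"
  shows "norm (inverse (complex_of_real (real k + c) powr (s + of_nat n)))
           \<le> (real k + c) powr (- Re s) * (1 / c) ^ n"
proof -
  define x where "x = real k + c"
  have x: "x > 0" "x \<ge> c" using assms by (auto simp: x_def)
  have "norm (inverse (complex_of_real x powr (s + of_nat n))) = x powr (- (Re s + real n))"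
    using norm_hz_term[OF assms(1), of k "s + of_nat n"] by (simp add: x_def)
  also have "\<dots> = x powr (- Re s) * inverse (x powr real n)"
    by (simp add: powr_diff divide_inverse)
  also have "\<dots> = x powr (- Re s) * inverse (x ^ n)"
    using x by (simp add: powr_realpow)
  also have "\<dots> \<le> x powr (- Re s) * (1 / c) ^ n"
  proof (rule mult_left_mono)
    have "c ^ n \<le> x ^ n" by (rule power_mono) (use x assms in auto)
    hence "inverse (x ^ n) \<le> inverse (c ^ n)" using assms by (intro le_imp_inverse_le) auto
    thus "inverse (x ^ n) \<le> (1 / c) ^ n" by (simp add: power_one_over inverse_eq_divide)
  qed simp
  finally show ?thesis by (simp add: x_def)
qed



lemma hz_binom:
  assumes c: "c > 1" and s: "Re s > 1"
  shows "(\<lambda>n. pochhammer s n / fact n * hurwitz_zeta_series (s + of_nat n) c)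
            sums hurwitz_zeta_series s (c - 1)"
proof -
  define T where "T k n = pochhammer s n / fact n * inverse (complex_of_real (real k + c) powr (s + of_nat n))" for k n
  define R where "R = norm s"
  define q where "q = 1 / c"
  define S where "S = (1 - q) powr (-R)"
  define p where "p n = pochhammer R n / fact n * q ^ n" for n
  define a where "a n = pochhammer s n / fact n * hurwitz_zeta_series (s + of_nat n) c" for n
  have c0: "c > 0" using c by simp
  have q: "0 \<le> q" "q < 1" using c by (auto simp: q_def)
  have psums: "p sums S" unfolding p_def S_def using binom_powser_real[OF q] by (simp add: R_def)
  have psum: "summable p" using psums by (rule sums_summable)
  have p0: "p n \<ge> 0" for n unfolding p_def using q
    by (auto intro!: mult_nonneg_nonneg divide_nonneg_nonneg pochhammer_nonneg0 simp: R_def)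
  have Tbound: "norm (T k n) \<le> (real k + c) powr (- Re s) * p n" for k n
  proof -
    have "norm (T k n) = norm (pochhammer s n) / fact n *
            norm (inverse (complex_of_real (real k + c) powr (s + of_nat n)))"
      unfolding T_def norm_mult norm_divide by simp
    also have "\<dots> \<le> pochhammer R n / fact n * ((real k + c) powr (- Re s) * (1 / c) ^ n)"
    proof (rule mult_mono)
      show "norm (pochhammer s n) / fact n \<le> pochhammer R n / fact n"
        unfolding R_def by (intro divide_right_mono norm_pochhammer_le) auto
      show "norm (inverse (complex_of_real (real k + c) powr (s + of_nat n)))
              \<le> (real k + c) powr (- Re s) * (1 / c) ^ n"
        using c0 by (intro norm_term_shift) auto
    qed (auto intro!: divide_nonneg_nonneg pochhammer_nonneg0 simp: R_def)
    also have "\<dots> = (real k + c) powr (- Re s) * p n" by (simp add: p_def q_def)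
    finally show ?thesis .
  qed
  have zsum: "summable (\<lambda>k. (real k + c) powr (- Re s))" using summable_powr_shift[OF c0 s] .
  have sumk: "(\<lambda>n. T k n) sums inverse (complex_of_real (real k + (c - 1)) powr s)" for k
  proof -
    have "\<bar>-1\<bar> < \<bar>real k + c\<bar>" using c by simp
    note H = gen_binomial_complex''[OF this, of "-s"]
    have E1: "((- s) gchoose n) * complex_of_real (real k + c) powr (- s - of_nat n) *
                complex_of_real (- 1) ^ n = T k n" for n
    proof -
      have e1: "complex_of_real (real k + c) powr (- s - of_nat n) =
                 inverse (complex_of_real (real k + c) powr (s + of_nat n))"
        using powr_minus[of "complex_of_real (real k + c)" "s + of_nat n"] by (simp add: algebra_simps)
      have e2: "(- s) gchoose n = (-1)^n * (pochhammer s n / fact n)" by (simp add: gbinomial_pochhammer)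
      have m1: "(-1::complex)^n * (-1)^n = 1" by (simp flip: power_mult_distrib)
      have "((- s) gchoose n) * complex_of_real (real k + c) powr (- s - of_nat n) * complex_of_real (- 1) ^ n
          = ((-1)^n * (-1)^n) * (pochhammer s n / fact n * inverse (complex_of_real (real k + c) powr (s + of_nat n)))"
        unfolding e1 e2 of_real_minus of_real_1 by (simp only: mult_ac)
      also have "\<dots> = T k n" unfolding m1 T_def by simp
      finally show ?thesis .
    qed
    have "real k + c + - 1 = real k + (c - 1)" by simp
    then have E2: "complex_of_real (real k + c + - 1) powr (- s) =
               inverse (complex_of_real (real k + (c - 1)) powr s)"
      by (simp only: powr_minus)
    show ?thesis using H unfolding E1 E2 .
  qed
  have nk: "summable (\<lambda>n. norm (T k n))" for k
    by (rule summable_comparison_test'[of "\<lambda>n. (real k + c) powr (- Re s) * p n" 0])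
       (use psum Tbound in \<open>auto intro: summable_mult\<close>)
  have nk_le: "(\<Sum>n. norm (T k n)) \<le> (real k + c) powr (- Re s) * S" for k
  proof -
    have "(\<Sum>n. norm (T k n)) \<le> (\<Sum>n. (real k + c) powr (- Re s) * p n)"
      by (rule suminf_le[OF Tbound nk summable_mult[OF psum]])
    also have "\<dots> = (real k + c) powr (- Re s) * S"
      using sums_unique[OF sums_mult[OF psums, of "(real k + c) powr (- Re s)"]] by simp
    finally show ?thesis .
  qed
  have hask: "((\<lambda>n. T k n) has_sum inverse (complex_of_real (real k + (c - 1)) powr s)) UNIV" for k
    by (rule norm_summable_imp_has_sum[OF nk sumk])
  have sumn: "(\<lambda>k. T k n) sums a n" for n
    unfolding T_def a_def
    by (rule sums_mult[OF hz_sums]) (use c0 s in auto)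
  have nn: "summable (\<lambda>k. norm (T k n))" for n
    by (rule summable_comparison_test'[of "\<lambda>k. (real k + c) powr (- Re s) * p n" 0])
       (use zsum Tbound in \<open>auto intro: summable_mult2\<close>)
  have hasn: "((\<lambda>k. T k n) has_sum a n) UNIV" for n
    by (rule norm_summable_imp_has_sum[OF nn sumn])
  have abs2: "(\<lambda>x. norm ((\<lambda>(k, n). T k n) x)) summable_on Sigma UNIV (\<lambda>_. UNIV)"
  proof (subst Infinite_Sum.abs_summable_on_Sigma_iff, intro conjI ballI)
    fix k :: nat
    show "(\<lambda>y. norm ((\<lambda>(k, n). T k n) (k, y))) summable_on UNIV"
      using nk[of k] by (auto intro: norm_summable_imp_summable_on)
  next
    have eq: "infsum (\<lambda>y. norm ((\<lambda>(k, n). T k n) (k, y))) UNIV = (\<Sum>n. norm (T k n))" for k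
    proof -
      have "((\<lambda>n. norm (T k n)) has_sum (\<Sum>n. norm (T k n))) UNIV"
        using nk[of k] by (intro norm_summable_imp_has_sum) (auto intro: summable_sums)
      then show ?thesis by (simp add: infsumI)
    qed
    have "summable (\<lambda>k. norm (norm (\<Sum>n. norm (T k n))))"
    proof (rule summable_comparison_test'[of "\<lambda>k. (real k + c) powr (- Re s) * S" 0])
      show "summable (\<lambda>k. (real k + c) powr (- Re s) * S)" using zsum by (rule summable_mult2)
      fix k :: nat
      have "0 \<le> (\<Sum>n. norm (T k n))" using nk[of k] by (intro suminf_nonneg) auto
      then show "norm (norm (norm (\<Sum>n. norm (T k n)))) \<le> (real k + c) powr (- Re s) * S"
        using nk_le[of k] by simp
    qed
    then show "(\<lambda>x. norm (infsum (\<lambda>y. norm ((\<lambda>(k, n). T k n) (x, y))) UNIV)) summable_on UNIV"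
      unfolding eq by (rule norm_summable_imp_summable_on)
  qed
  have sum2: "(\<lambda>(k, n). T k n) summable_on (UNIV \<times> UNIV)"
    using abs_summable_summable[OF abs2] by simp
  from infsum_swap_banach[OF sum2]
  have swap: "infsum (\<lambda>k. infsum (\<lambda>n. T k n) UNIV) UNIV = infsum (\<lambda>n. infsum (\<lambda>k. T k n) UNIV) UNIV" .
  have lhs: "infsum (\<lambda>k. infsum (\<lambda>n. T k n) UNIV) UNIV = hurwitz_zeta_series s (c - 1)"
  proof -
    have "infsum (\<lambda>k. infsum (\<lambda>n. T k n) UNIV) UNIV =
          infsum (\<lambda>k. inverse (complex_of_real (real k + (c - 1)) powr s)) UNIV"
      by (rule infsum_cong) (rule infsumI[OF hask])
    also have "\<dots> = hurwitz_zeta_series s (c - 1)"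
      using c s by (intro infsumI norm_summable_imp_has_sum[OF hz_summable_norm hz_sums]) auto
    finally show ?thesis .
  qed
  have rhs: "infsum (\<lambda>n. infsum (\<lambda>k. T k n) UNIV) UNIV = infsum a UNIV"
    by (rule infsum_cong) (rule infsumI[OF hasn])
  define Z where "Z = (\<Sum>k. (real k + c) powr (- Re s))"
  have an: "norm (a n) \<le> Z * p n" for n
  proof -
    have "a n = (\<Sum>k. T k n)" using sumn[of n] by (simp add: sums_iff)
    then have "norm (a n) \<le> (\<Sum>k. norm (T k n))" using summable_norm[OF nn[of n]] by simp
    also have "\<dots> \<le> (\<Sum>k. (real k + c) powr (- Re s) * p n)"
      by (rule suminf_le[OF Tbound nn summable_mult2[OF zsum]])
    also have "\<dots> = Z * p n" unfolding Z_def by (rule suminf_mult2[symmetric, OF zsum])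
    finally show ?thesis .
  qed
  have asum: "summable (\<lambda>n. norm (a n))"
    by (rule summable_comparison_test'[of "\<lambda>n. Z * p n" 0]) (use psum an in \<open>auto intro: summable_mult\<close>)
  have "(a has_sum suminf a) UNIV"
    by (rule norm_summable_imp_has_sum[OF asum summable_sums[OF summable_norm_cancel[OF asum]]])
  then have "infsum a UNIV = suminf a" by (rule infsumI)
  with swap lhs rhs have "suminf a = hurwitz_zeta_series s (c - 1)" by simp
  moreover have "a sums suminf a" by (rule summable_sums[OF summable_norm_cancel[OF asum]])
  ultimately show ?thesis unfolding a_def by simp
qed



definition Z0 :: "real \<Rightarrow> complex \<Rightarrow> complex" where
  "Z0 c w = (w - 1) * hurwitz_zeta_series w c"

definition recop :: "real \<Rightarrow> (complex \<Rightarrow> complex) \<Rightarrow> complex \<Rightarrow> complex" where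
  "recop c F w = complex_of_real (c - 1) powr (1 - w) -
     (\<Sum>i. pochhammer (w - 1) (Suc i) / fact (i + 2) * F (w + of_nat i + 1))"

lemma rec_Z0:
  assumes c: "c > 1" and w: "Re w > 2"
  shows "recop c (Z0 c) w = Z0 c w"
proof -
  define s where "s = w - 1"
  have s: "Re s > 1" using w by (simp add: s_def)
  have c1: "c - 1 > 0" using c by simp
  note B = hz_binom[OF c s]
  have "hurwitz_zeta_series s (c - 1) =
          inverse (complex_of_real (c - 1) powr s) + hurwitz_zeta_series s (c - 1 + 1)"
    by (rule hz_shift[OF c1 s])
  hence hsh: "hurwitz_zeta_series s (c - 1) =
          inverse (complex_of_real (c - 1) powr s) + hurwitz_zeta_series s c" by simp
  define inv where "inv = inverse (complex_of_real (c - 1) powr s)"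
  define t where "t n = pochhammer s n / fact n * hurwitz_zeta_series (s + of_nat n) c" for n
  have "t sums (inv + t 0)" using B hsh unfolding t_def inv_def by simp
  hence t1: "(\<lambda>n. t (Suc n)) sums inv" by (subst sums_Suc_iff)
  define u where "u i = pochhammer s i / fact (Suc i) * Z0 c (w + of_nat i)" for i
  have tu: "t (Suc i) = u i" for i
  proof -
    have e: "s + of_nat (Suc i) = w + of_nat i" by (simp add: s_def)
    have "t (Suc i) = pochhammer s i * (s + of_nat i) / fact (Suc i) * hurwitz_zeta_series (w + of_nat i) c"
      unfolding t_def e by (simp add: pochhammer_Suc)
    also have "s + of_nat i = w + of_nat i - 1" by (simp add: s_def)
    finally show ?thesis unfolding u_def Z0_def by simp
  qed
  have u1: "u sums inv" using t1 unfolding tu .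
  have "u 0 = Z0 c w" by (simp add: u_def)
  have u2: "(\<lambda>j. u (Suc j)) sums (inv - Z0 c w)"
    using u1 \<open>u 0 = Z0 c w\<close> by (subst sums_Suc_iff) simp
  have uS: "u (Suc j) = pochhammer (w - 1) (Suc j) / fact (j + 2) * Z0 c (w + of_nat j + 1)" for j
  proof -
    have e: "w + of_nat (Suc j) = w + of_nat j + 1" by (simp add: add_ac)
    have f: "fact (Suc (Suc j)) = (fact (j + 2) :: complex)" by simp
    show ?thesis by (simp only: u_def s_def e f)
  qed
  have "(\<Sum>i. pochhammer (w - 1) (Suc i) / fact (i + 2) * Z0 c (w + of_nat i + 1)) = inv - Z0 c w"
    using u2 unfolding uS by (simp add: sums_iff)
  moreover have "complex_of_real (c - 1) powr (1 - w) = inv"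
    unfolding inv_def s_def using powr_minus[of "complex_of_real (c - 1)" "w - 1"] by simp
  ultimately show ?thesis unfolding recop_def by simp
qed

lemma pochhammer_mono_real:
  fixes a b :: real
  assumes "0 \<le> a" "a \<le> b"
  shows "pochhammer a n \<le> pochhammer b n"
  unfolding pochhammer_prod using assms by (intro prod_mono) auto

lemma rec_holo:
  assumes c: "c > 1"
    and F: "F holomorphic_on {w. x < Re w}"
    and FZ: "\<And>w. 2 < Re w \<Longrightarrow> F w = Z0 c w"
  shows "recop c F holomorphic_on {w. x - 1 < Re w}"
proof (rule holo_local)
  fix z assume z: "z \<in> {w. x - 1 < Re w}"
  define r where "r = (Re z - (x - 1)) / 2"
  have r: "r > 0" using z by (simp add: r_def)
  have reW: "Re w > x - 1" if "w \<in> cball z r" for w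
  proof -
    have "\<bar>Re z - Re w\<bar> \<le> r"
      using that abs_Re_le_cmod[of "z - w"] by (auto simp: dist_norm)
    then have "Re z - Re w \<le> r" by (rule abs_le_D1)
    then show ?thesis using r_def r by (simp add: field_simps)
  qed
  have nW: "norm w \<le> norm z + r" if "w \<in> cball z r" for w
    using that norm_triangle_ineq2[of w z] by (auto simp: dist_norm norm_minus_commute)
  define R where "R = norm z + r + 1"
  have R0: "R \<ge> 1" using r by (simp add: R_def)
  define K where "K = (\<Sum>k. (real k + c) powr (-2))"
  define N where "N = nat \<lceil>R\<rceil> + 1"
  define q where "q = 1 / c"
  have q: "0 \<le> q" "q < 1" using c by (auto simp: q_def)
  define p where "p n = pochhammer R n / fact n * q ^ n" for n
  define M where "M i = p (i + 2) * (K * c powr R * c ^ 2)" for i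
  have K0: "K \<ge> 0" unfolding K_def using summable_powr_shift[of c 2] c
    by (intro suminf_nonneg) auto
  have "(\<lambda>w. \<Sum>i. pochhammer (w - 1) (Suc i) / fact (i + 2) * F (w + of_nat i + 1)) holomorphic_on ball z r"
  proof (rule holo_suminf_ball[where M = M])
    fix i :: nat
    have "(F \<circ> (\<lambda>w. w + of_nat i + 1)) holomorphic_on cball z r"
    proof (rule holomorphic_on_compose_gen[OF _ F])
      show "(\<lambda>w. w + of_nat i + 1) holomorphic_on cball z r" by (intro holomorphic_intros)
      show "(\<lambda>w. w + of_nat i + 1) ` cball z r \<subseteq> {w. x < Re w}"
      proof
        fix y assume "y \<in> (\<lambda>w. w + of_nat i + 1) ` cball z r"
        then obtain w where w: "w \<in> cball z r" "y = w + of_nat i + 1" by auto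
        have h1: "Re w > x - 1" using reW[OF w(1)] .
        have h2: "Re y = Re w + real i + 1" using w(2) by simp
        have "x < Re y" using h1 h2 by linarith
        then show "y \<in> {w. x < Re w}" by simp
      qed
    qed
    then have "(\<lambda>w. F (w + of_nat i + 1)) holomorphic_on cball z r" by (simp add: o_def)
    then show "(\<lambda>w. pochhammer (w - 1) (Suc i) / fact (i + 2) * F (w + of_nat i + 1)) holomorphic_on cball z r"
      by (intro holomorphic_intros) auto
  next
    show "eventually (\<lambda>i. \<forall>w\<in>cball z r. norm (pochhammer (w - 1) (Suc i) / fact (i + 2) * F (w + of_nat i + 1)) \<le> M i) sequentially"
      using eventually_ge_at_top[of N]
    proof eventually_elim
      case (elim i)
      have iR: "real i \<ge> R + 1"
      proof -
        have "real i \<ge> real (nat \<lceil>R\<rceil>) + 1" using elim by (simp add: N_def)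
        moreover have "real (nat \<lceil>R\<rceil>) \<ge> R" using R0 by linarith
        ultimately show ?thesis by simp
      qed
      show ?case
      proof
        fix w assume w: "w \<in> cball z r"
        have nw: "norm w \<le> R - 1" using nW[OF w] by (simp add: R_def)
        have rew: "Re w \<ge> 1 - R" using abs_Re_le_cmod[of w] nw by linarith
        define v where "v = w + of_nat i + 1"
        have rev: "Re v = Re w + real i + 1" by (simp add: v_def)
        have rev2: "Re v > 2" using rev rew iR by linarith
        have eqF: "F v = (w + of_nat i) * hurwitz_zeta_series v c"
          using FZ[OF rev2] by (simp add: Z0_def v_def)
        have A: "norm (pochhammer (w - 1) (Suc i)) \<le> pochhammer R (Suc i)"
        proof -
          have "norm (w - 1) \<le> norm w + 1" using norm_triangle_ineq4[of w 1] by simp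
          also have "\<dots> \<le> R" using nw by simp
          finally have "norm (w - 1) \<le> R" .
          then show ?thesis using norm_pochhammer_le[of "w - 1" "Suc i"]
            pochhammer_mono_real[of "norm (w - 1)" R "Suc i"] by simp
        qed
        have B: "norm (w + of_nat i) \<le> R + real (Suc i)"
          using norm_triangle_ineq[of w "of_nat i"] nw by simp
        have C: "norm (hurwitz_zeta_series v c) \<le> K * (c powr R * q ^ i)"
        proof -
          have "norm (hurwitz_zeta_series v c) \<le> K * c powr (2 - Re v)"
            unfolding K_def using hz_bound[OF c] rev2 by simp
          also have "c powr (2 - Re v) \<le> c powr (R - real i)"
            using c rev rew by (intro powr_mono) auto
          hence "K * c powr (2 - Re v) \<le> K * c powr (R - real i)" using K0 by (rule mult_left_mono)
          also have "c powr (R - real i) = c powr R * q ^ i"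
            using c by (simp add: powr_diff q_def powr_realpow power_one_over divide_inverse power_inverse)
          finally show ?thesis .
        qed
        have "norm (pochhammer (w - 1) (Suc i) / fact (i + 2) * F (w + of_nat i + 1))
              = norm (pochhammer (w - 1) (Suc i)) / fact (i + 2) * (norm (w + of_nat i) * norm (hurwitz_zeta_series v c))"
          unfolding v_def[symmetric] eqF by (simp only: norm_mult norm_divide norm_fact)
        also have "\<dots> \<le> pochhammer R (Suc i) / fact (i + 2) * ((R + real (Suc i)) * (K * (c powr R * q ^ i)))"
          using A B C R0 K0 q
          by (intro mult_mono divide_right_mono) (auto intro!: mult_nonneg_nonneg divide_nonneg_nonneg pochhammer_nonneg0)
        also have "\<dots> = M i"
        proof -
          have pS: "pochhammer R (Suc (Suc i)) = pochhammer R (Suc i) * (R + real (Suc i))"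
            by (simp add: pochhammer_Suc)
          have qc: "q ^ i = q ^ (i + 2) * c ^ 2"
            using c by (simp add: q_def power_add power_one_over power2_eq_square)
          show ?thesis unfolding M_def p_def qc
            by (simp add: pS numeral_2_eq_2 field_simps)
        qed
        finally show "norm (pochhammer (w - 1) (Suc i) / fact (i + 2) * F (w + of_nat i + 1)) \<le> M i" .
      qed
    qed
  next
    have "summable p" unfolding p_def using binom_powser_real[OF q, of R] R0 by (auto intro: sums_summable)
    then have "summable (\<lambda>i. p (i + 2))" by (subst summable_iff_shift)
    then show "summable M" unfolding M_def by (rule summable_mult2)
  qed
  then show "\<exists>r>0. recop c F holomorphic_on ball z r"
    using r unfolding recop_def by (intro exI[of _ r] conjI holomorphic_intros) auto
qed



lemma Z0_holo: "c > 0 \<Longrightarrow> Z0 c holomorphic_on {w. 1 < Re w}"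
  unfolding Z0_def[abs_def] using hz_holo[of c] by (intro holomorphic_intros) auto

lemma strips:
  assumes c: "c > 1"
  shows "\<exists>F. F holomorphic_on {w. 1 - real m < Re w} \<and> (\<forall>w. 2 < Re w \<longrightarrow> F w = Z0 c w)
             \<and> (m \<ge> 1 \<longrightarrow> F 1 = 1)"
proof (induction m)
  case 0
  show ?case using Z0_holo[of c] c by (intro exI[of _ "Z0 c"]) auto
next
  case (Suc m)
  then obtain F where F: "F holomorphic_on {w. 1 - real m < Re w}"
    and FZ: "\<And>w. 2 < Re w \<Longrightarrow> F w = Z0 c w" by blast
  have h: "recop c F holomorphic_on {w. 1 - real m - 1 < Re w}"
    by (rule rec_holo[OF c F FZ])
  have e: "{w. 1 - real m - 1 < Re w} = {w. 1 - real (Suc m) < Re w}" by simp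
  have agree: "recop c F w = Z0 c w" if w: "2 < Re w" for w
  proof -
    have "recop c F w = recop c (Z0 c) w"
      unfolding recop_def using w by (simp add: FZ)
    also have "\<dots> = Z0 c w" by (rule rec_Z0[OF c w])
    finally show ?thesis .
  qed
  have one: "recop c F 1 = 1"
    using c by (simp add: recop_def pochhammer_0_left)
  show ?case using h agree one unfolding e by (intro exI[of _ "recop c F"]) auto
qed

lemma entire_ext:
  assumes c: "c > 1"
  shows "\<exists>G. G holomorphic_on UNIV \<and> (\<forall>w. 2 < Re w \<longrightarrow> G w = Z0 c w) \<and> G 1 = 1"
proof -
  define D where "D m = {w. 1 - real m < Re w}" for m :: nat
  have "\<forall>m. \<exists>F. F holomorphic_on D m \<and> (\<forall>w. 2 < Re w \<longrightarrow> F w = Z0 c w) \<and> (m \<ge> 1 \<longrightarrow> F 1 = 1)"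
    unfolding D_def using strips[OF c] by blast
  then obtain Fs where Fs: "\<And>m. Fs m holomorphic_on D m" "\<And>m w. 2 < Re w \<Longrightarrow> Fs m w = Z0 c w"
    "\<And>m. m \<ge> 1 \<Longrightarrow> Fs m 1 = 1" by metis
  have openD: "open (D m)" for m unfolding D_def by (rule open_halfspace_Re_gt)
  have consist: "Fs m w = Fs n w" if "w \<in> D m" "w \<in> D n" for m n w
  proof (rule analytic_continuation_open[of "{w. 2 < Re w}" "D (min m n)" "Fs m" "Fs n" w])
    show "open {w. 2 < Re w}" by (rule open_halfspace_Re_gt)
    show "open (D (min m n))" by (rule openD)
    show "{w. 2 < Re w} \<noteq> {}" by (auto intro!: exI[of _ 3])
    show "connected (D (min m n))" unfolding D_def
      by (rule convex_connected) (rule convex_halfspace_Re_gt)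
    show "{w. 2 < Re w} \<subseteq> D (min m n)" unfolding D_def by auto
    show "Fs m holomorphic_on D (min m n)"
      by (rule holomorphic_on_subset[OF Fs(1)]) (auto simp: D_def)
    show "Fs n holomorphic_on D (min m n)"
      by (rule holomorphic_on_subset[OF Fs(1)]) (auto simp: D_def)
    show "\<And>z. z \<in> {w. 2 < Re w} \<Longrightarrow> Fs m z = Fs n z" using Fs(2) by auto
    show "w \<in> D (min m n)" using that by (auto simp: D_def min_def)
  qed
  define mm where "mm w = nat \<lceil>- Re w\<rceil> + 2" for w
  have inD: "w \<in> D (mm w)" for w
  proof -
    have "real (nat \<lceil>- Re w\<rceil>) \<ge> - Re w" by linarith
    then show ?thesis by (simp add: D_def mm_def)
  qed
  define G where "G w = Fs (mm w) w" for w
  have GF: "G w = Fs n w" if "w \<in> D n" for n w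
    unfolding G_def using consist[OF inD that] .
  have "G holomorphic_on UNIV"
  proof (rule holo_local)
    fix z :: complex
    obtain e where e: "e > 0" "ball z e \<subseteq> D (mm z)"
      using openD[of "mm z"] inD[of z] by (meson open_contains_ball)
    have "Fs (mm z) holomorphic_on ball z e" using Fs(1) e(2) by (rule holomorphic_on_subset)
    then have "G holomorphic_on ball z e"
      by (rule holomorphic_transform) (use GF e(2) in auto)
    then show "\<exists>r>0. G holomorphic_on ball z r" using e(1) by blast
  qed
  moreover have "\<forall>w. 2 < Re w \<longrightarrow> G w = Z0 c w" using Fs(2) by (simp add: G_def)
  moreover have "G 1 = 1" unfolding G_def by (rule Fs(3)) (simp add: mm_def)
  ultimately show ?thesis by blast
qed

lemma reg_c:
  assumes c: "c > 1"
  shows "\<exists>g. g holomorphic_on UNIV \<and> (\<forall>s. 1 < Re s \<longrightarrow> g s = hurwitz_zeta_series s c - 1 / (s - 1))"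
proof -
  obtain G where G: "G holomorphic_on UNIV" "\<And>w. 2 < Re w \<Longrightarrow> G w = Z0 c w" "G 1 = 1"
    using entire_ext[OF c] by blast
  have GZ: "G w = Z0 c w" if "1 < Re w" for w
  proof (rule analytic_continuation_open[of "{w. 2 < Re w}" "{w. 1 < Re w}" G "Z0 c" w])
    show "open {w. 2 < Re w}" by (rule open_halfspace_Re_gt)
    show "open {w. 1 < Re w}" by (rule open_halfspace_Re_gt)
    show "{w. 2 < Re w} \<noteq> {}" by (auto intro!: exI[of _ 3])
    show "connected {w. 1 < Re w}" by (rule convex_connected) (rule convex_halfspace_Re_gt)
    show "{w. 2 < Re w} \<subseteq> {w. 1 < Re w}" by auto
    show "G holomorphic_on {w. 1 < Re w}" using G(1) by (rule holomorphic_on_subset) auto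
    show "Z0 c holomorphic_on {w. 1 < Re w}" using c by (intro Z0_holo) auto
    show "\<And>z. z \<in> {w. 2 < Re w} \<Longrightarrow> G z = Z0 c z" using G(2) by auto
    show "w \<in> {w. 1 < Re w}" using that by simp
  qed
  define g where "g w = (if w = 1 then deriv G 1 else (G w - G 1) / (w - 1))" for w
  have "g holomorphic_on UNIV" unfolding g_def[abs_def]
    by (rule pole_lemma_open[OF G(1)]) simp
  moreover have "g s = hurwitz_zeta_series s c - 1 / (s - 1)" if s: "1 < Re s" for s
  proof -
    have s1: "s \<noteq> 1" using s by auto
    then have "s - 1 \<noteq> 0" by simp
    then show ?thesis using GZ[OF s] s1 G(3) by (simp add: g_def Z0_def field_simps)
  qed
  ultimately show ?thesis by blast
qed

lemma reg_a:
  assumes a: "a > 0"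
  shows "\<exists>g. g holomorphic_on UNIV \<and> (\<forall>s. 1 < Re s \<longrightarrow> g s = hurwitz_zeta_series s a - 1 / (s - 1))"
proof -
  obtain g where g: "g holomorphic_on UNIV" "\<And>s. 1 < Re s \<Longrightarrow> g s = hurwitz_zeta_series s (a + 1) - 1 / (s - 1)"
    using reg_c[of "a + 1"] a by auto
  have h: "(\<lambda>s. inverse (complex_of_real (real 0 + a) powr s)) holomorphic_on UNIV"
    using a by (intro hz_term_holo holomorphic_intros)
  have "(\<lambda>s. inverse (complex_of_real a powr s) + g s) holomorphic_on UNIV"
    using a h g(1) by (intro holomorphic_intros) (auto simp: powr_def)
  moreover have "inverse (complex_of_real a powr s) + g s = hurwitz_zeta_series s a - 1 / (s - 1)" if "1 < Re s" for s
    using hz_shift[OF a that] g(2)[OF that] by simp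
  ultimately show ?thesis by (intro exI[of _ "\<lambda>s. inverse (complex_of_real a powr s) + g s"]) auto
qed

lemma regular_eq:
  assumes a: "a > 0"
  obtains g where "hurwitz_zeta_regular a = g" "g holomorphic_on UNIV"
    "\<And>s. 1 < Re s \<Longrightarrow> g s = hurwitz_zeta_series s a - 1 / (s - 1)"
proof -
  obtain g where g: "g holomorphic_on UNIV" "\<forall>s. 1 < Re s \<longrightarrow> g s = hurwitz_zeta_series s a - 1 / (s - 1)"
    using reg_a[OF a] by blast
  have "hurwitz_zeta_regular a = g"
    unfolding hurwitz_zeta_regular_def
  proof (rule the_equality)
    show "g holomorphic_on UNIV \<and> (\<forall>s. 1 < Re s \<longrightarrow> g s = hurwitz_zeta_series s a - 1 / (s - 1))"
      using g by blast
    fix h assume h: "h holomorphic_on UNIV \<and> (\<forall>s. 1 < Re s \<longrightarrow> h s = hurwitz_zeta_series s a - 1 / (s - 1))"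
    show "h = g"
    proof
      fix w
      show "h w = g w"
      proof (rule analytic_continuation_open[of "{w. 1 < Re w}" UNIV h g w])
        show "open {w. 1 < Re w}" by (rule open_halfspace_Re_gt)
        show "{w. 1 < Re w} \<noteq> {}" by (auto intro!: exI[of _ 3])
        show "\<And>z. z \<in> {w. 1 < Re w} \<Longrightarrow> h z = g z" using h g by auto
      qed (use h g in auto)
    qed
  qed
  then show ?thesis using that g by blast
qed



abbreviation "PI \<equiv> complex_of_real pi"

lemma deriv3:
  assumes S: "open S" "z \<in> S"
   and d1: "\<And>x. x \<in> S \<Longrightarrow> (f has_field_derivative f1 x) (at x)"
   and d2: "\<And>x. x \<in> S \<Longrightarrow> (f1 has_field_derivative f2 x) (at x)"
   and d3: "\<And>x. x \<in> S \<Longrightarrow> (f2 has_field_derivative f3 x) (at x)"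
  shows "(deriv ^^ 3) f z = (f3 z :: complex)"
proof -
  have e1: "deriv f x = f1 x" if "x \<in> S" for x using DERIV_imp_deriv[OF d1[OF that]] .
  have e2: "deriv (deriv f) x = f2 x" if x: "x \<in> S" for x
  proof -
    have "(deriv f has_field_derivative f2 x) (at x)"
      by (rule has_field_derivative_transform_within_open[OF d2[OF x] S(1) x]) (use e1 in auto)
    then show ?thesis by (rule DERIV_imp_deriv)
  qed
  have "(deriv (deriv f) has_field_derivative f3 z) (at z)"
    by (rule has_field_derivative_transform_within_open[OF d3[OF S(2)] S(1) S(2)]) (use e2 in auto)
  then have "deriv (deriv (deriv f)) z = f3 z" by (rule DERIV_imp_deriv)
  then show ?thesis by (simp add: numeral_3_eq_3)
qed

definition Sb :: "complex set" where "Sb = ball (1/2) (1/2)"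

lemma Sb_Re: assumes "x \<in> Sb" shows "0 < Re x" "Re x < 1"
proof -
  have "\<bar>Re (x - 1/2)\<bar> < 1/2"
    using assms abs_Re_le_cmod[of "x - 1/2"] by (auto simp: Sb_def dist_norm norm_minus_commute)
  then have "Re (x - 1/2) < 1/2 \<and> - Re (x - 1/2) < 1/2" by (simp only: abs_less_iff)
  then show "0 < Re x" "Re x < 1" by auto
qed

lemma Sb_sym: "x \<in> Sb \<Longrightarrow> 1 - x \<in> Sb"
  by (auto simp: Sb_def dist_norm norm_minus_commute)

lemma Sb_nonpos: assumes "x \<in> Sb" shows "x \<notin> \<int>\<^sub>\<le>\<^sub>0"
proof
  assume "x \<in> \<int>\<^sub>\<le>\<^sub>0"
  then obtain n where "x = - of_nat n" by (auto elim!: nonpos_Ints_cases')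
  then have "Re x \<le> 0" by simp
  with Sb_Re[OF assms] show False by simp
qed

lemma Sb_sin: assumes "x \<in> Sb" shows "sin (PI * x) \<noteq> 0"
proof
  assume "sin (PI * x) = 0"
  then obtain n :: int where n: "PI * x = of_real (of_int n * pi)" by (auto simp: sin_eq_0)
  have "x = of_int n"
  proof -
    have "PI * x = PI * of_int n" using n by simp
    moreover have "PI \<noteq> 0" by simp
    ultimately show ?thesis by simp
  qed
  then have "Re x = real_of_int n" by simp
  with Sb_Re[OF assms] have "0 < n" "n < 1" by linarith+
  then show False by simp
qed

lemma digamma_refl:
  assumes x: "x \<in> Sb"
  shows "Digamma x - Digamma (1 - x) = - PI * cos (PI * x) / sin (PI * x)"
proof -
  have x1: "1 - x \<in> Sb" by (rule Sb_sym[OF x])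
  have nx: "x \<notin> \<int>\<^sub>\<le>\<^sub>0" and nx1: "1 - x \<notin> \<int>\<^sub>\<le>\<^sub>0" using Sb_nonpos x x1 by auto
  have sx: "sin (PI * x) \<noteq> 0" by (rule Sb_sin[OF x])
  have Q: "Gamma y * Gamma (1 - y) * sin (PI * y) = PI" if "y \<in> Sb" for y
    using Gamma_reflection_complex[of y] Sb_sin[OF that] by simp
  have h1: "(Gamma has_field_derivative Gamma x * Digamma x) (at x)"
    by (rule has_field_derivative_Gamma[OF nx])
  have dm: "((\<lambda>z. 1 - z) has_field_derivative -1) (at x)"
    by (auto intro!: derivative_eq_intros)
  have h2: "((\<lambda>z. Gamma (1 - z)) has_field_derivative (Gamma (1 - x) * Digamma (1 - x)) * (-1)) (at x)"
    using DERIV_chain2[where f = Gamma and g = "\<lambda>z. 1 - z", OF has_field_derivative_Gamma[OF nx1] dm] by simp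
  have h3: "((\<lambda>z. sin (PI * z)) has_field_derivative PI * cos (PI * x)) (at x)"
    by (auto intro!: derivative_eq_intros)
  have hQ: "((\<lambda>z. Gamma z * Gamma (1 - z) * sin (PI * z)) has_field_derivative
      ((Gamma x * Digamma x) * Gamma (1 - x) + ((Gamma (1 - x) * Digamma (1 - x)) * (-1)) * Gamma x) * sin (PI * x)
        + (PI * cos (PI * x)) * (Gamma x * Gamma (1 - x))) (at x)"
    using DERIV_mult[OF DERIV_mult[OF h1 h2] h3] by simp
  have hC: "((\<lambda>z. Gamma z * Gamma (1 - z) * sin (PI * z)) has_field_derivative 0) (at x)"
    by (rule has_field_derivative_transform_within_open[OF DERIV_const[of PI] _ x])
       (auto simp: Sb_def Q)
  have raw: "((Gamma x * Digamma x) * Gamma (1 - x) + ((Gamma (1 - x) * Digamma (1 - x)) * (-1)) * Gamma x) * sin (PI * x)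
        + (PI * cos (PI * x)) * (Gamma x * Gamma (1 - x)) = 0"
    using DERIV_unique[OF hQ hC] .
  have "Gamma x * Gamma (1 - x) * ((Digamma x - Digamma (1 - x)) * sin (PI * x) + PI * cos (PI * x)) = 0"
    using raw by (simp add: algebra_simps)
  moreover have "Gamma x \<noteq> 0" "Gamma (1 - x) \<noteq> 0" using nx nx1 by (auto simp: Gamma_eq_zero_iff)
  ultimately have "(Digamma x - Digamma (1 - x)) * sin (PI * x) + PI * cos (PI * x) = 0" by simp
  with sx show ?thesis by (simp add: field_simps)
qed

lemma poly_chain:
  fixes x :: complex
  assumes nx: "x \<notin> \<int>\<^sub>\<le>\<^sub>0" and nx1: "1 - x \<notin> \<int>\<^sub>\<le>\<^sub>0"
  shows "((\<lambda>z. Polygamma n z - (-1)^n * Polygamma n (1 - z)) has_field_derivative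
           (Polygamma (Suc n) x - (-1)^(Suc n) * Polygamma (Suc n) (1 - x))) (at x)"
proof -
  have a: "(Polygamma n has_field_derivative Polygamma (Suc n) x) (at x)"
    by (rule has_field_derivative_Polygamma[OF nx])
  have dm: "((\<lambda>z. 1 - z) has_field_derivative -1) (at x)"
    by (auto intro!: derivative_eq_intros)
  have b: "((\<lambda>z. Polygamma n (1 - z)) has_field_derivative Polygamma (Suc n) (1 - x) * (-1)) (at x)"
    using DERIV_chain2[where f = "Polygamma n" and g = "\<lambda>z. 1 - z", OF has_field_derivative_Polygamma[OF nx1] dm] by simp
  show ?thesis
    by (rule DERIV_cong[OF DERIV_diff[OF a DERIV_cmult[OF b, of "(-1)^n"]]]) simp
qed

lemma trig_chain:
  fixes x :: complex
  assumes sx: "sin (PI * x) \<noteq> 0"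
  shows "((\<lambda>z. - PI * cos (PI * z) / sin (PI * z)) has_field_derivative PI^2 / sin (PI * x)^2) (at x)"
    and "((\<lambda>z. PI^2 / sin (PI * z)^2) has_field_derivative -2 * PI^3 * cos (PI * x) / sin (PI * x)^3) (at x)"
    and "((\<lambda>z. -2 * PI^3 * cos (PI * z) / sin (PI * z)^3) has_field_derivative
            2 * PI^4 * (sin (PI * x)^2 + 3 * cos (PI * x)^2) / sin (PI * x)^4) (at x)"
proof -
  have ds: "((\<lambda>z. sin (PI * z)) has_field_derivative PI * cos (PI * x)) (at x)"
    by (auto intro!: derivative_eq_intros)
  have dc: "((\<lambda>z. cos (PI * z)) has_field_derivative -(PI * sin (PI * x))) (at x)"
    by (auto intro!: derivative_eq_intros)
  define S where "S = sin (PI * x)"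
  define C where "C = cos (PI * x)"
  have S0: "S \<noteq> 0" using sx by (simp add: S_def)
  have SC: "S^2 + C^2 = 1" by (simp add: S_def C_def)
  show "((\<lambda>z. - PI * cos (PI * z) / sin (PI * z)) has_field_derivative PI^2 / sin (PI * x)^2) (at x)"
  proof (rule DERIV_cong[OF DERIV_divide[OF DERIV_cmult[OF dc, of "-PI"] ds sx]])
    have "(- PI * - (PI * S) * S - - PI * C * (PI * C)) = PI^2 * (S^2 + C^2)"
      by (simp add: power2_eq_square algebra_simps)
    then show "(- PI * - (PI * sin (PI * x)) * sin (PI * x) - - PI * cos (PI * x) * (PI * cos (PI * x))) /
        (sin (PI * x) * sin (PI * x)) = PI\<^sup>2 / (sin (PI * x))\<^sup>2"
      unfolding S_def[symmetric] C_def[symmetric] SC by (simp add: power2_eq_square)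
  qed
  have nz2: "sin (PI * x)^2 \<noteq> 0" using sx by simp
  show "((\<lambda>z. PI^2 / sin (PI * z)^2) has_field_derivative -2 * PI^3 * cos (PI * x) / sin (PI * x)^3) (at x)"
  proof (rule DERIV_cong[OF DERIV_divide[OF DERIV_const DERIV_power[OF ds] nz2]])
    show "(0 * sin (PI * x)^2 - PI^2 * (of_nat 2 * (PI * cos (PI * x) * sin (PI * x) ^ (2 - Suc 0)))) /
          (sin (PI * x)^2 * sin (PI * x)^2) = -2 * PI^3 * cos (PI * x) / sin (PI * x)^3"
      unfolding S_def[symmetric] C_def[symmetric] using S0 by (simp add: field_simps eval_nat_numeral)
  qed
  have nz3: "sin (PI * x)^3 \<noteq> 0" using sx by simp
  show "((\<lambda>z. -2 * PI^3 * cos (PI * z) / sin (PI * z)^3) has_field_derivative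
            2 * PI^4 * (sin (PI * x)^2 + 3 * cos (PI * x)^2) / sin (PI * x)^4) (at x)"
  proof (rule DERIV_cong[OF DERIV_divide[OF DERIV_cmult[OF dc, of "-2 * PI^3"] DERIV_power[OF ds, of 3] nz3]])
    show "(-2 * PI^3 * - (PI * sin (PI * x)) * sin (PI * x)^3 - -2 * PI^3 * cos (PI * x) *
            (of_nat 3 * (PI * cos (PI * x) * sin (PI * x) ^ (3 - Suc 0)))) /
          (sin (PI * x)^3 * sin (PI * x)^3) = 2 * PI^4 * (sin (PI * x)^2 + 3 * cos (PI * x)^2) / sin (PI * x)^4"
      unfolding S_def[symmetric] C_def[symmetric] using S0 by (simp add: field_simps eval_nat_numeral)
  qed
qed

lemma polygamma3_refl: "Polygamma 3 (1/4::real) + Polygamma 3 (3/4) = 16 * pi^4"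
proof -
  define z0 :: complex where "z0 = 1/4"
  have z0: "z0 \<in> Sb" by (simp add: z0_def Sb_def dist_norm)
  have oS: "open Sb" by (simp add: Sb_def)
  define g where "g n z = Polygamma n z - (-1)^n * Polygamma n (1 - z)" for n and z :: complex
  have gch: "(g n has_field_derivative g (Suc n) x) (at x)" if "x \<in> Sb" for n x
    unfolding g_def[abs_def] using poly_chain[OF Sb_nonpos[OF that] Sb_nonpos[OF Sb_sym[OF that]]] by simp
  have A: "(deriv ^^ 3) (g 0) z0 = g 3 z0"
    by (rule deriv3[OF oS z0]) (use gch in \<open>simp_all add: numeral_3_eq_3\<close>)
  have g0: "g 0 x = - PI * cos (PI * x) / sin (PI * x)" if "x \<in> Sb" for x
    using digamma_refl[OF that] by (simp add: g_def)
  have B: "(deriv ^^ 3) (g 0) z0 = 2 * PI^4 * (sin (PI * z0)^2 + 3 * cos (PI * z0)^2) / sin (PI * z0)^4"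
  proof (rule deriv3[OF oS z0])
    fix x assume x: "x \<in> Sb"
    show "(g 0 has_field_derivative PI^2 / sin (PI * x)^2) (at x)"
      by (rule has_field_derivative_transform_within_open[OF trig_chain(1)[OF Sb_sin[OF x]] oS x])
         (simp add: g0)
    show "((\<lambda>x. PI^2 / sin (PI * x)^2) has_field_derivative -2 * PI^3 * cos (PI * x) / sin (PI * x)^3) (at x)"
      by (rule trig_chain(2)[OF Sb_sin[OF x]])
    show "((\<lambda>x. -2 * PI^3 * cos (PI * x) / sin (PI * x)^3) has_field_derivative
            2 * PI^4 * (sin (PI * x)^2 + 3 * cos (PI * x)^2) / sin (PI * x)^4) (at x)"
      by (rule trig_chain(3)[OF Sb_sin[OF x]])
  qed
  have e: "PI * z0 = of_real (pi / 4)" by (simp add: z0_def)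
  have s4: "sin (PI * z0) = of_real (sqrt 2 / 2)" unfolding e sin_of_real sin_45 ..
  have c4: "cos (PI * z0) = of_real (sqrt 2 / 2)" unfolding e cos_of_real cos_45 ..
  have sq: "(sqrt 2 / 2 :: real)^2 = 1/2" by (simp add: power_divide)
  have sq4: "(sqrt 2 / 2 :: real)^4 = 1/4"
  proof -
    have "(sqrt 2 / 2 :: real)^4 = ((sqrt 2 / 2)^2)^2" by (simp flip: power_mult)
    then show ?thesis using sq by (simp add: power2_eq_square)
  qed
  have "2 * PI^4 * (sin (PI * z0)^2 + 3 * cos (PI * z0)^2) / sin (PI * z0)^4 = 16 * PI^4"
    unfolding s4 c4 of_real_power[symmetric] sq sq4 by simp
  with A B have "g 3 z0 = 16 * PI^4" by simp
  moreover have "g 3 z0 = Polygamma 3 (1/4 :: complex) + Polygamma 3 (3/4 :: complex)"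
    by (simp add: g_def z0_def)
  moreover have "Polygamma 3 (1/4 :: complex) = of_real (Polygamma 3 (1/4))"
    using Polygamma_of_real[of "1/4" 3] by simp
  moreover have "Polygamma 3 (3/4 :: complex) = of_real (Polygamma 3 (3/4))"
    using Polygamma_of_real[of "3/4" 3] by simp
  ultimately have "complex_of_real (Polygamma 3 (1/4) + Polygamma 3 (3/4)) = complex_of_real (16 * pi^4)"
    by simp
  then show ?thesis by (simp only: of_real_eq_iff)
qed



lemma taylor_a:
  assumes a: "a > 0"
  shows "(\<lambda>n. (-1) ^ n / fact n * 3 ^ n * stieltjes n a) sums (hurwitz_zeta_series 4 a - 1/3)"
proof -
  obtain g where g: "hurwitz_zeta_regular a = g" "g holomorphic_on UNIV"
    "\<And>s. 1 < Re s \<Longrightarrow> g s = hurwitz_zeta_series s a - 1 / (s - 1)"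
    using regular_eq[OF a] by blast
  have "g holomorphic_on ball 1 5" using g(2) by (rule holomorphic_on_subset) auto
  from holomorphic_power_series[OF this, of 4]
  have P: "(\<lambda>n. (deriv ^^ n) g 1 / fact n * (4 - 1) ^ n) sums g 4" by (simp add: dist_norm)
  have eq: "(-1) ^ n / fact n * 3 ^ n * stieltjes n a = (deriv ^^ n) g 1 / fact n * (4 - 1) ^ n" for n
    unfolding stieltjes_def g(1) by (cases "even n") simp_all
  have "g 4 = hurwitz_zeta_series 4 a - 1/3" using g(3)[of 4] by simp
  then show ?thesis using P unfolding eq[symmetric] by simp
qed

lemma hz4:
  assumes a: "a > 0"
  shows "hurwitz_zeta_series 4 a = complex_of_real (Polygamma 3 a) / 6"
proof -
  have S1: "(\<lambda>k. inverse (complex_of_real (real k + a) powr 4)) sums hurwitz_zeta_series 4 a"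
    using a by (intro hz_sums) auto
  have a0: "complex_of_real a \<noteq> 0" using a by simp
  have S2: "(\<lambda>k. inverse ((complex_of_real a + of_nat k) ^ Suc 3)) sums
             ((-1) ^ Suc 3 * Polygamma 3 (complex_of_real a) / fact 3)"
    by (rule Polygamma_LIMSEQ[OF a0]) simp
  have eq: "inverse (complex_of_real (real k + a) powr 4) = inverse ((complex_of_real a + of_nat k) ^ Suc 3)" for k
  proof -
    have nz: "complex_of_real (real k + a) \<noteq> 0" using a
      by (metis add_nonneg_pos of_nat_0_le_iff of_real_eq_0_iff order_less_irrefl)
    have "complex_of_real (real k + a) powr of_nat 4 = complex_of_real (real k + a) ^ 4"
      using powr_nat'[of "complex_of_real (real k + a)" 4] nz by blast
    then have e1: "complex_of_real (real k + a) powr 4 = complex_of_real (real k + a) ^ 4" by simp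
    have e2: "complex_of_real (real k + a) = complex_of_real a + of_nat k" by (simp add: add.commute)
    have e3: "(4::nat) = Suc 3" by simp
    show ?thesis unfolding e1 unfolding e2 e3 by (rule refl)
  qed
  have "hurwitz_zeta_series 4 a = (-1) ^ Suc 3 * Polygamma 3 (complex_of_real a) / fact 3"
    using S1 S2 unfolding eq by (rule sums_unique2)
  also have "\<dots> = complex_of_real (Polygamma 3 a) / 6"
    using a by (simp add: Polygamma_of_real fact_numeral)
  finally show ?thesis .
qed

theorem proposition5:
  shows "(\<lambda>n. inverse (4 ^ 4) * ((-1) ^ n / fact n * 3 ^ n *
            (stieltjes n (1/4) - stieltjes n (3/4))))
         sums (complex_of_real (Polygamma 3 (1/4 :: real) / 768 - pi ^ 4 / 96))"
proof -
  have T: "(\<lambda>n. (-1) ^ n / fact n * 3 ^ n * stieltjes n (1/4) - (-1) ^ n / fact n * 3 ^ n * stieltjes n (3/4))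
          sums ((hurwitz_zeta_series 4 (1/4) - 1/3) - (hurwitz_zeta_series 4 (3/4) - 1/3))"
    by (intro sums_diff taylor_a) auto
  from sums_mult[OF T, of "inverse (4 ^ 4)"]
  have T2: "(\<lambda>n. inverse (4 ^ 4) * ((-1) ^ n / fact n * 3 ^ n * (stieltjes n (1/4) - stieltjes n (3/4))))
          sums (inverse (4 ^ 4) * ((hurwitz_zeta_series 4 (1/4) - 1/3) - (hurwitz_zeta_series 4 (3/4) - 1/3)))"
    by (simp add: right_diff_distrib)
  have R: "Polygamma 3 (3/4::real) = 16 * pi^4 - Polygamma 3 (1/4)"
    using polygamma3_refl by simp
  have "inverse (4 ^ 4) * ((hurwitz_zeta_series 4 (1/4) - 1/3) - (hurwitz_zeta_series 4 (3/4) - 1/3))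
        = inverse (4 ^ 4) * (complex_of_real (Polygamma 3 (1/4)) / 6 - complex_of_real (Polygamma 3 (3/4)) / 6)"
    by (simp add: hz4)
  also have "\<dots> = complex_of_real ((Polygamma 3 (1/4) - Polygamma 3 (3/4)) / 1536)"
    by simp
  also have "(Polygamma 3 (1/4) - Polygamma 3 (3/4)) / 1536 = Polygamma 3 (1/4 :: real) / 768 - pi ^ 4 / 96"
    unfolding R by simp
  finally have V: "inverse (4 ^ 4) * ((hurwitz_zeta_series 4 (1/4) - 1/3) - (hurwitz_zeta_series 4 (3/4) - 1/3))
       = complex_of_real (Polygamma 3 (1/4 :: real) / 768 - pi ^ 4 / 96)" .
  show ?thesis using T2 unfolding V .
qed

end
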